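(* Let the setting be as in the context. For any $p\ge2$ there exists $C_p>0$ such that for all $\varepsilon>0$ and $x,y\in\mathbb{R}$, \[ \mathbb{E}\big[|\widetilde W_\varepsilon(x)-\widetilde W_\varepsilon(y)|^p\big]\le C_p|x-y|^{pH}. \]
   Context: Let $\{g(x)\}_{x\in\mathbb{R}}$ be a continuous, centered, stationary Gaussian field with $\mathbb{E}[g(0)^2]=1$ and covariance $R_g(x)=\kappa_g|x|^{-\alpha}L(|x|)$ for $x\neq0$, where $\alpha\in(0,1)$, $\kappa_g>0$, $L$ slowly varying at infinity (taken $L\equiv1$ in asymptotic statements), with spectral measure satisfying $\int|\xi|^{\alpha-1}\mu_g(d\xi)<\infty$. Let $H=1-\alpha/2$ and $\widetilde W_\varepsilon(x):=\varepsilon^{-\alpha/2}\int_0^x g(y/\varepsilon)\,dy$. *)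

theory Defs
  imports "HOL-Probability.Probability"
begin

definition slowly_varying :: "(real \<Rightarrow> real) \<Rightarrow> bool" where
  "slowly_varying L \<longleftrightarrow>
     (\<forall>\<^sub>F t in at_top. L t > 0) \<and>
     (\<forall>lam>0. ((\<lambda>t. L (lam * t) / L t) \<longlongrightarrow> 1) at_top)"

definition centered_gaussian_rv :: "'a measure \<Rightarrow> ('a \<Rightarrow> real) \<Rightarrow> real \<Rightarrow> bool" where
  "centered_gaussian_rv M X v \<longleftrightarrow>
     X \<in> borel_measurable M \<and> v \<ge> 0 \<and>
     (if v = 0 then (AE \<omega> in M. X \<omega> = 0)
      else distributed M lborel X (normal_density 0 (sqrt v)))"

definition centered_gaussian_field :: "'a measure \<Rightarrow> (real \<Rightarrow> 'a \<Rightarrow> real) \<Rightarrow> bool" where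
  "centered_gaussian_field M g \<longleftrightarrow>
     (\<forall>x. g x \<in> borel_measurable M) \<and>
     (\<forall>(xs::real list) (cs::real list). length xs = length cs \<longrightarrow>
        (\<exists>v. centered_gaussian_rv M (\<lambda>\<omega>. \<Sum>i<length xs. cs ! i * g (xs ! i) \<omega>) v))"

definition stationary_cov :: "'a measure \<Rightarrow> (real \<Rightarrow> 'a \<Rightarrow> real) \<Rightarrow> (real \<Rightarrow> real) \<Rightarrow> bool" where
  "stationary_cov M g R \<longleftrightarrow>
     (\<forall>x y. integrable M (\<lambda>\<omega>. g x \<omega> * g y \<omega>) \<and>
            (\<integral>\<omega>. g x \<omega> * g y \<omega> \<partial>M) = R (x - y))"

definition W_tilde :: "real \<Rightarrow> (real \<Rightarrow> 'a \<Rightarrow> real) \<Rightarrow> real \<Rightarrow> real \<Rightarrow> 'a \<Rightarrow> real" where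
  "W_tilde \<alpha> g \<epsilon> x \<omega> = \<epsilon> powr (-\<alpha>/2) * (LBINT y=0..x. g (y / \<epsilon>) \<omega>)"

end

theory Submission
  imports Defs
begin

lemma deriv_LBINT:
  fixes f :: "real \<Rightarrow> real"
  assumes "continuous_on UNIV f"
  shows "((\<lambda>u. LBINT y=0..u. f y) has_real_derivative f x) (at x)"
proof -
  have "((\<lambda>u. LBINT y=0..u. f y) has_vector_derivative f x) (at x within {-\<bar>x\<bar>-1..\<bar>x\<bar>+1})"
    using interval_integral_FTC2[of "-\<bar>x\<bar>-1" 0 "\<bar>x\<bar>+1" f x] continuous_on_subset[OF assms]
    by (simp add: zero_ereal_def)
  then show ?thesis
    by (simp add: at_within_Icc_at has_real_derivative_iff_has_vector_derivative)
qed

lemma riemann: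
  fixes f F :: "real \<Rightarrow> real"
  assumes yx: "y < x" and cf: "continuous_on UNIV f"
    and dF: "\<And>t. (F has_real_derivative f t) (at t)"
  shows "(\<lambda>n. (x-y)/n * (\<Sum>i<n. f (y + real i*(x-y)/n))) \<longlonglongrightarrow> F x - F y"
proof (rule LIMSEQ_I)
  fix e :: real assume e: "e > 0"
  define e' where "e' = e / (2*(x-y))"
  have e': "e' > 0" using e yx by (simp add: e'_def)
  have "uniformly_continuous_on {y..x} f"
    by (rule compact_uniformly_continuous) (auto intro: continuous_on_subset[OF cf])
  then obtain d where d: "d > 0" and dd: "\<And>s t. s \<in> {y..x} \<Longrightarrow> t \<in> {y..x} \<Longrightarrow> dist t s < d \<Longrightarrow> dist (f t) (f s) < e'"
    unfolding uniformly_continuous_on_def using e' by metis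
  obtain N :: nat where N: "(x-y)/d < N" using reals_Archimedean2 by blast
  have "0 < (x-y)/d" using yx d by simp
  then have Npos: "N > 0" using N by linarith
  show "\<exists>N. \<forall>n\<ge>N. norm ((x-y)/n * (\<Sum>i<n. f (y + real i*(x-y)/n)) - (F x - F y)) < e"
  proof (intro exI allI impI)
    fix n assume nN: "n \<ge> N"
    have npos: "n > 0" using nN Npos by simp
    define h where "h = (x-y)/n"
    have hpos: "h > 0" using npos yx by (simp add: h_def)
    have hd: "h < d"
    proof -
      have "(x-y)/d < n" using N nN by (meson le_less_trans not_less of_nat_le_iff)
      then have "x - y < n * d" using d by (simp add: divide_less_eq mult.commute)
      then show ?thesis using npos by (simp add: h_def divide_less_eq mult.commute)
    qed
    define t where "t i = y + real i * h" for i :: nat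
    have tn: "t n = x" using npos by (simp add: t_def h_def)
    have t0: "t 0 = y" by (simp add: t_def)
    have step: "\<bar>F (t (Suc i)) - F (t i) - h * f (t i)\<bar> \<le> h * e'" if i: "i < n" for i
    proof -
      have lt: "t i < t (Suc i)" using hpos by (simp add: t_def algebra_simps)
      obtain z where z: "t i < z" "z < t (Suc i)" "F (t (Suc i)) - F (t i) = (t (Suc i) - t i) * f z"
        using MVT2[OF lt, of F f] dF by blast
      have tsi: "t (Suc i) - t i = h" by (simp add: t_def algebra_simps)
      have ti_ge: "t i \<ge> y" using hpos by (simp add: t_def)
      have tsi_le: "t (Suc i) \<le> x"
      proof -
        have "real (Suc i) * h \<le> real n * h" using i hpos by (intro mult_right_mono) auto
        then show ?thesis using npos by (simp add: t_def h_def)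
      qed
      have "dist z (t i) < d" using z tsi hd by (simp add: dist_real_def)
      then have "dist (f z) (f (t i)) < e'" using z ti_ge tsi_le by (intro dd) auto
      then have "\<bar>f z - f (t i)\<bar> \<le> e'" by (simp add: dist_real_def)
      then have "h * \<bar>f z - f (t i)\<bar> \<le> h * e'" using hpos by (intro mult_left_mono) auto
      moreover have "\<bar>h * f z - h * f (t i)\<bar> = h * \<bar>f z - f (t i)\<bar>"
        using hpos by (simp add: abs_mult flip: right_diff_distrib)
      ultimately show ?thesis using z(3) tsi by simp
    qed
    have "F x - F y = (\<Sum>i<n. F (t (Suc i)) - F (t i))"
      using sum_lessThan_telescope[of "\<lambda>i. F (t i)" n] tn t0 by simp
    then have "(x-y)/n * (\<Sum>i<n. f (y + real i*(x-y)/n)) - (F x - F y)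
        = - (\<Sum>i<n. F (t (Suc i)) - F (t i) - h * f (t i))"
      by (simp add: sum_distrib_left sum_subtractf t_def h_def)
    then have "norm ((x-y)/n * (\<Sum>i<n. f (y + real i*(x-y)/n)) - (F x - F y))
        = \<bar>\<Sum>i<n. F (t (Suc i)) - F (t i) - h * f (t i)\<bar>" by simp
    also have "\<dots> \<le> (\<Sum>i<n. \<bar>F (t (Suc i)) - F (t i) - h * f (t i)\<bar>)" by (rule sum_abs)
    also have "\<dots> \<le> (\<Sum>i<n. h * e')" by (intro sum_mono step) auto
    also have "\<dots> = e/2" using npos yx by (simp add: h_def e'_def field_simps)
    also have "\<dots> < e" using e by simp
    finally show "norm ((x-y)/n * (\<Sum>i<n. f (y + real i*(x-y)/n)) - (F x - F y)) < e" .
  qed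
qed


lemma pw_bound:
  fixes x s p :: real and k :: nat
  assumes s: "s > 0" and p: "0 \<le> p" "p \<le> 2 * real k"
  shows "\<bar>x\<bar> powr p \<le> s powr p + s powr (p - 2 * real k) * x ^ (2 * k)"
proof (cases "\<bar>x\<bar> \<le> s")
  case True
  then have "\<bar>x\<bar> powr p \<le> s powr p" using p by (intro powr_mono2) auto
  moreover have "0 \<le> s powr (p - 2 * real k) * x ^ (2 * k)"
    by (simp add: zero_le_even_power)
  ultimately show ?thesis by linarith
next
  case False
  then have g1: "\<bar>x\<bar> / s \<ge> 1" using s by simp
  have "\<bar>x\<bar> powr p = s powr p * (\<bar>x\<bar> / s) powr p" using s by (simp add: powr_divide)
  also have "(\<bar>x\<bar> / s) powr p \<le> (\<bar>x\<bar> / s) powr (2 * real k)"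
    using g1 p by (intro powr_mono) auto
  then have "s powr p * (\<bar>x\<bar> / s) powr p \<le> s powr p * (\<bar>x\<bar> / s) powr (2 * real k)"
    by (intro mult_left_mono) auto
  also have "s powr p * (\<bar>x\<bar> / s) powr (2 * real k) = s powr (p - 2 * real k) * \<bar>x\<bar> powr (2 * real k)"
    using s by (simp add: powr_divide powr_diff)
  also have "\<bar>x\<bar> powr (2 * real k) = x ^ (2 * k)"
  proof -
    have "\<bar>x\<bar> powr (real (2*k)) = \<bar>x\<bar>^(2*k)" using False s by (intro powr_realpow) auto
    then show ?thesis by (simp add: power_even_abs)
  qed
  finally show ?thesis by (smt (verit) powr_ge_zero)
qed

lemma gauss_moment:
  fixes X :: "'a \<Rightarrow> real"
  assumes P: "prob_space M" and G: "centered_gaussian_rv M X v"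
    and p: "0 \<le> p" "p \<le> 2 * real k"
  shows "integrable M (\<lambda>\<omega>. (X \<omega>)^2) \<and> (\<integral>\<omega>. (X \<omega>)^2 \<partial>M) = v"
    and "(\<integral>\<^sup>+\<omega>. ennreal (\<bar>X \<omega>\<bar> powr p) \<partial>M) \<le> ennreal ((1 + fact(2*k)/(2^k*fact k)) * v powr (p/2))"
proof -
  interpret prob_space M by (rule P)
  have Xm: "X \<in> borel_measurable M" and v0: "v \<ge> 0" using G by (auto simp: centered_gaussian_rv_def)
  have "(integrable M (\<lambda>\<omega>. (X \<omega>)^2) \<and> (\<integral>\<omega>. (X \<omega>)^2 \<partial>M) = v) \<and>
     (\<integral>\<^sup>+\<omega>. ennreal (\<bar>X \<omega>\<bar> powr p) \<partial>M) \<le> ennreal ((1 + fact(2*k)/(2^k*fact k)) * v powr (p/2))"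
  proof (cases "v = 0")
    case True
    then have AE: "AE \<omega> in M. X \<omega> = 0" using G by (simp add: centered_gaussian_rv_def)
    have i1: "integrable M (\<lambda>\<omega>. (X \<omega>)^2) = integrable M (\<lambda>\<omega>. 0::real)"
      using AE Xm by (intro integrable_cong_AE) auto
    have i2: "(\<integral>\<omega>. (X \<omega>)^2 \<partial>M) = (\<integral>\<omega>. 0 \<partial>M)"
      using AE Xm by (intro integral_cong_AE) auto
    have i3: "(\<integral>\<^sup>+\<omega>. ennreal (\<bar>X \<omega>\<bar> powr p) \<partial>M) = (\<integral>\<^sup>+\<omega>. 0 \<partial>M)"
      using AE by (intro nn_integral_cong_AE) auto
    show ?thesis using i1 i2 i3 True by simp
  next
    case False
    define s where "s = sqrt v"
    have s: "s > 0" using False v0 by (simp add: s_def)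
    have D: "distributed M lborel X (normal_density 0 s)"
      using G False by (simp add: centered_gaussian_rv_def s_def)
    have int2: "integrable lborel (\<lambda>x. normal_density 0 s x * x^2)"
      using integrable_normal_moment[OF s, of 0 2] by simp
    have A1: "integrable M (\<lambda>\<omega>. (X \<omega>)^2)"
      using distributed_integrable[OF D, of "\<lambda>x. x^2"] int2 by simp
    have "(\<integral>\<omega>. (X \<omega>)^2 \<partial>M) = (\<integral>x. normal_density 0 s x * x^2 \<partial>lborel)"
      using distributed_integral[OF D, of "\<lambda>x. x^2"] by simp
    also have "\<dots> = s^2"
      using integral_normal_moment_even[OF s, of 0 1] by simp
    also have "\<dots> = v" using v0 by (simp add: s_def)
    finally have A2: "(\<integral>\<omega>. (X \<omega>)^2 \<partial>M) = v" .
    define m where "m = (fact(2*k)/(2^k*fact k) :: real)"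
    have int2k: "integrable lborel (\<lambda>x. normal_density 0 s x * x^(2*k))"
      using integrable_normal_moment[OF s, of 0 "2*k"] by simp
    have mom: "(\<integral>x. normal_density 0 s x * x^(2*k) \<partial>lborel) = s^(2*k) * m"
      using integral_normal_moment_even[OF s, of 0 k] s
      by (simp add: m_def power_divide power_mult field_simps flip: power_mult_distrib) (simp add: power_mult[symmetric] mult.commute)
    have intB: "integrable lborel (\<lambda>x. normal_density 0 s x * (s powr p + s powr (p - 2 * real k) * x ^ (2 * k)))"
      using int2k integrable_normal_density[OF s, of 0] by (simp add: distrib_left mult.left_commute[of _ "s powr _"])
    have "(\<integral>\<^sup>+\<omega>. ennreal (\<bar>X \<omega>\<bar> powr p) \<partial>M)
        = (\<integral>\<^sup>+x. ennreal (normal_density 0 s x) * ennreal (\<bar>x\<bar> powr p) \<partial>lborel)"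
      using distributed_nn_integral[OF D, of "\<lambda>x. ennreal (\<bar>x\<bar> powr p)"] by simp
    also have "\<dots> \<le> (\<integral>\<^sup>+x. ennreal (normal_density 0 s x * (s powr p + s powr (p - 2 * real k) * x ^ (2 * k))) \<partial>lborel)"
      using pw_bound[OF s p]
      by (intro nn_integral_mono) (auto simp: ennreal_mult'[symmetric] intro!: ennreal_leI mult_left_mono)
    also have "\<dots> = ennreal (\<integral>x. normal_density 0 s x * (s powr p + s powr (p - 2 * real k) * x ^ (2 * k)) \<partial>lborel)"
      using intB by (intro nn_integral_eq_integral) (auto simp: zero_le_even_power)
    also have "(\<integral>x. normal_density 0 s x * (s powr p + s powr (p - 2 * real k) * x ^ (2 * k)) \<partial>lborel)
        = s powr p + s powr (p - 2 * real k) * (s^(2*k) * m)"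
      using int2k mom integrable_normal_density[OF s, of 0] integral_normal_density[OF s, of 0] by (simp add: distrib_left mult.left_commute[of _ "s powr _"])
    also have "\<dots> = (1 + m) * s powr p"
      using s by (simp add: powr_diff powr_realpow[symmetric] field_simps)
    also have "s powr p = v powr (p/2)"
      using v0 by (simp add: s_def powr_half_sqrt[symmetric] powr_powr)
    finally show ?thesis using A1 A2 by (simp add: m_def)
  qed
  then show "integrable M (\<lambda>\<omega>. (X \<omega>)^2) \<and> (\<integral>\<omega>. (X \<omega>)^2 \<partial>M) = v"
    and "(\<integral>\<^sup>+\<omega>. ennreal (\<bar>X \<omega>\<bar> powr p) \<partial>M) \<le> ennreal ((1 + fact(2*k)/(2^k*fact k)) * v powr (p/2))"
    by auto
qed


lemma powsum_bound:
  fixes a :: real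
  assumes a: "0 < a" "a < 1"
  shows "(\<Sum>d=1..m. real d powr (-a)) \<le> real m powr (1-a) / (1-a)"
proof (induction m)
  case 0
  then show ?case by simp
next
  case (Suc m)
  have step: "real (Suc m) powr (-a) \<le> (real (Suc m) powr (1-a) - real m powr (1-a)) / (1-a)"
  proof (cases "m = 0")
    case True
    then show ?thesis using a by (simp add: field_simps)
  next
    case False
    have "\<exists>z. real m < z \<and> z < real (Suc m) \<and>
        real (Suc m) powr (1-a) - real m powr (1-a) = (real (Suc m) - real m) * ((1-a) * z powr (1-a-1))"
    proof (rule MVT2)
      fix x :: real assume "real m \<le> x" "x \<le> real (Suc m)"
      then have "x > 0" using False by linarith
      then show "((\<lambda>t. t powr (1-a)) has_real_derivative (1-a) * x powr (1-a-1)) (at x)"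
        by (auto intro!: derivative_eq_intros)
    qed simp
    then obtain z where z: "real m < z" "z < real (Suc m)"
      "real (Suc m) powr (1-a) - real m powr (1-a) = (1-a) * z powr (-a)" by auto
    have "real (Suc m) powr (-a) \<le> z powr (-a)"
      using z False a by (intro powr_mono2') auto
    moreover have "(real (Suc m) powr (1-a) - real m powr (1-a)) / (1-a) = z powr (-a)"
      using z(3) a by simp
    ultimately show ?thesis by linarith
  qed
  show ?case using Suc step by (simp add: diff_divide_distrib)
qed

lemma double_sum_bound:
  fixes \<phi> :: "nat \<Rightarrow> real"
  assumes nn: "\<And>d. \<phi> d \<ge> 0"
  shows "(\<Sum>i<n. \<Sum>j<n. \<phi> (if i \<le> j then j - i else i - j)) \<le> real n * (2 * (\<Sum>d<n. \<phi> d))"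
proof -
  have inner: "(\<Sum>j<n. \<phi> (if i \<le> j then j - i else i - j)) \<le> 2 * (\<Sum>d<n. \<phi> d)" if i: "i < n" for i
  proof -
    have split: "{..<n} = {i..<n} \<union> {..<i}" using i by auto
    have "(\<Sum>j<n. \<phi> (if i \<le> j then j - i else i - j))
        = (\<Sum>j\<in>{i..<n}. \<phi> (j - i)) + (\<Sum>j\<in>{..<i}. \<phi> (i - j))"
      by (subst split, subst sum.union_disjoint) (auto intro!: arg_cong2[where f="(+)"] sum.cong)
    also have "(\<Sum>j\<in>{i..<n}. \<phi> (j - i)) = (\<Sum>d\<in>(\<lambda>j. j - i) ` {i..<n}. \<phi> d)"
      by (subst sum.reindex) (auto simp: inj_on_def)
    also have "\<dots> \<le> (\<Sum>d<n. \<phi> d)"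
      using nn by (intro sum_mono2) auto
    also have "(\<Sum>j\<in>{..<i}. \<phi> (i - j)) = (\<Sum>d\<in>(\<lambda>j. i - j) ` {..<i}. \<phi> d)"
      by (subst sum.reindex) (auto simp: inj_on_def)
    also have "\<dots> \<le> (\<Sum>d<n. \<phi> d)"
      using nn i by (intro sum_mono2) auto
    finally show ?thesis by simp
  qed
  have "(\<Sum>i<n. \<Sum>j<n. \<phi> (if i \<le> j then j - i else i - j)) \<le> (\<Sum>i<n. 2 * (\<Sum>d<n. \<phi> d))"
    by (intro sum_mono inner) auto
  then show ?thesis by simp
qed


lemma var_bound:
  fixes R :: "real \<Rightarrow> real" and a Cb e \<Delta> y :: real and n :: nat
  assumes a: "0 < a" "a < 1" and Cb: "Cb > 0"
    and R1: "\<And>z. \<bar>R z\<bar> \<le> 1" and R2: "\<And>z. z \<noteq> 0 \<Longrightarrow> \<bar>R z\<bar> \<le> Cb * \<bar>z\<bar> powr (-a)"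
    and e: "e > 0" and n: "n > 0" and D: "\<Delta> > 0"
  shows "(\<Sum>i<n. \<Sum>j<n. (e powr (-a/2) * (\<Delta>/n)) * (e powr (-a/2) * (\<Delta>/n)) *
            R ((y + real i * (\<Delta>/n))/e - (y + real j * (\<Delta>/n))/e))
         \<le> 2 * e powr (-a) * (\<Delta>/n) * \<Delta> + 2 * Cb / (1-a) * \<Delta> powr (2-a)"
proof -
  define h where "h = \<Delta>/n"
  define c where "c = e powr (-a/2) * h"
  have h: "h > 0" using D n by (simp add: h_def)
  define \<phi> where "\<phi> d = (if d = 0 then 1 else Cb * (real d * h / e) powr (-a))" for d :: nat
  have \<phi>nn: "\<phi> d \<ge> 0" for d using Cb by (simp add: \<phi>_def)
  have trm: "c * c * R ((y + real i * h)/e - (y + real j * h)/e) \<le> c * c * \<phi> (if i \<le> j then j - i else i - j)" for i j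
  proof -
    have eq: "\<bar>(y + real i * h)/e - (y + real j * h)/e\<bar> = real (if i \<le> j then j - i else i - j) * h / e"
      using h e by (auto simp: field_simps abs_if of_nat_diff)
    have "R ((y + real i * h)/e - (y + real j * h)/e) \<le> \<phi> (if i \<le> j then j - i else i - j)"
    proof (cases "i = j")
      case True then show ?thesis using R1[of 0] by (simp add: \<phi>_def)
    next
      case False
      then have ne: "(y + real i * h)/e - (y + real j * h)/e \<noteq> 0" using h e by (auto simp: field_simps)
      have nz: "(if i \<le> j then j - i else i - j) \<noteq> 0" using False by auto
      show ?thesis using R2[OF ne] nz unfolding \<phi>_def eq by auto
    qed
    then show ?thesis by (intro mult_left_mono) auto
  qed
  obtain m where m: "n = Suc m" using n not0_implies_Suc by blast
  have sphi: "(\<Sum>d<n. \<phi> d) \<le> 1 + Cb * (h/e) powr (-a) * (real n powr (1-a) / (1-a))"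
  proof -
    have "(\<Sum>d<n. \<phi> d) = 1 + (\<Sum>d<m. \<phi> (Suc d))" unfolding m sum.lessThan_Suc_shift by (simp add: \<phi>_def)
    also have "(\<Sum>d<m. \<phi> (Suc d)) = Cb * (h/e) powr (-a) * (\<Sum>d=1..m. real d powr (-a))"
      by (simp add: sum.atLeast1_atMost_eq sum_distrib_left sum_divide_distrib \<phi>_def powr_mult powr_divide mult_ac del: of_nat_Suc)
    also have "\<dots> \<le> Cb * (h/e) powr (-a) * (real m powr (1-a) / (1-a))"
      using powsum_bound[OF a, of m] Cb by (intro mult_left_mono) auto
    also have "\<dots> \<le> Cb * (h/e) powr (-a) * (real n powr (1-a) / (1-a))"
      using a Cb m by (intro mult_left_mono divide_right_mono powr_mono2) auto
    finally show ?thesis by simp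
  qed
  have "(\<Sum>i<n. \<Sum>j<n. c * c * R ((y + real i * h)/e - (y + real j * h)/e))
      \<le> (\<Sum>i<n. \<Sum>j<n. c * c * \<phi> (if i \<le> j then j - i else i - j))"
    by (intro sum_mono trm)
  also have "\<dots> = c * c * (\<Sum>i<n. \<Sum>j<n. \<phi> (if i \<le> j then j - i else i - j))"
    by (simp add: sum_distrib_left)
  also have "\<dots> \<le> c * c * (real n * (2 * (\<Sum>d<n. \<phi> d)))"
    by (intro mult_left_mono double_sum_bound \<phi>nn) auto
  also have "\<dots> \<le> c * c * (real n * (2 * (1 + Cb * (h/e) powr (-a) * (real n powr (1-a) / (1-a)))))"
    using sphi by (intro mult_left_mono) auto
  also have "\<dots> = 2 * e powr (-a) * h * \<Delta> + 2 * Cb / (1-a) * \<Delta> powr (2-a)"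
  proof -
    have e1: "e powr (-a/2) * e powr (-a/2) = e powr (-a)" by (simp flip: powr_add)
    have e2: "e powr (-a) * e powr a = 1" using e by (simp flip: powr_add)
    have hn: "h * real n = \<Delta>" using n by (simp add: h_def)
    have h2: "h * h * h powr (-a) = h powr (2-a)" using h
      by (simp add: powr_diff powr_minus field_simps power2_eq_square flip: powr_realpow)
    have n2: "real n * real n powr (1-a) = real n powr (2-a)" using n
      by (simp add: powr_diff powr_minus field_simps power2_eq_square)
    have hn2: "h powr (2-a) * real n powr (2-a) = \<Delta> powr (2-a)" using h n hn
      by (simp flip: powr_mult)
    have "c * c * (real n * (2 * (1 + Cb * (h/e) powr (-a) * (real n powr (1-a) / (1-a)))))
       = 2 * (e powr (-a/2) * e powr (-a/2)) * h * (h * real n)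
         + 2 * Cb / (1-a) * (e powr (-a/2) * e powr (-a/2) * e powr a) * (h * h * h powr (-a)) * (real n * real n powr (1-a))"
      using e h a by (simp add: c_def powr_divide powr_minus field_simps)
    also have "\<dots> = 2 * e powr (-a) * h * \<Delta> + 2 * Cb / (1-a) * \<Delta> powr (2-a)"
      unfolding e1 e2 hn h2 n2 mult.assoc[symmetric] using hn2 by (simp add: mult.assoc)
    finally show ?thesis .
  qed
  finally show ?thesis by (simp add: c_def h_def)
qed


theorem lemma5p3:
  fixes M :: "'a measure" and g :: "real \<Rightarrow> 'a \<Rightarrow> real"
    and R L :: "real \<Rightarrow> real" and \<mu> :: "real measure"
    and \<alpha> \<kappa> :: real
  assumes prob: "prob_space M"
    and gauss: "centered_gaussian_field M g"
    and cont: "\<forall>\<omega>\<in>space M. continuous_on UNIV (\<lambda>x. g x \<omega>)"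
    and stat: "stationary_cov M g R"
    and var1: "R 0 = 1"
    and alpha: "0 < \<alpha>" "\<alpha> < 1"
    and kappa: "\<kappa> > 0"
    and covR: "\<forall>x. x \<noteq> 0 \<longrightarrow> R x = \<kappa> * \<bar>x\<bar> powr (-\<alpha>) * L \<bar>x\<bar>"
    and Lsv: "slowly_varying L"
    and L1: "\<forall>\<^sub>F t in at_top. L t = 1"
    and mu_fin: "finite_measure \<mu>" and mu_sets: "sets \<mu> = sets borel"
    and spectral: "\<forall>x. R x = (\<integral>\<xi>. cos (x * \<xi>) \<partial>\<mu>)"
    and mu_nz: "AE \<xi> in \<mu>. \<xi> \<noteq> 0"
    and mu_int: "integrable \<mu> (\<lambda>\<xi>. \<bar>\<xi>\<bar> powr (\<alpha> - 1))"
  shows "\<forall>p::real. p \<ge> 2 \<longrightarrow> (\<exists>C>0. \<forall>\<epsilon>>0. \<forall>x y.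
           (\<integral>\<^sup>+ \<omega>. ennreal (\<bar>W_tilde \<alpha> g \<epsilon> x \<omega> - W_tilde \<alpha> g \<epsilon> y \<omega>\<bar> powr p) \<partial>M)
             \<le> ennreal (C * \<bar>x - y\<bar> powr (p * (1 - \<alpha>/2))))"
proof (intro allI impI)
  fix p :: real assume p2: "p \<ge> 2"
  interpret P: prob_space M by (rule prob)
  interpret MU: finite_measure \<mu> by (rule mu_fin)
  have gm[measurable]: "\<And>x. g x \<in> borel_measurable M" using gauss by (simp add: centered_gaussian_field_def)
  have cosint: "integrable \<mu> (\<lambda>\<xi>. cos (z * \<xi>))" for z
  proof (rule MU.integrable_const_bound[where B=1])
    show "(\<lambda>\<xi>. cos (z * \<xi>)) \<in> borel_measurable \<mu>"
      unfolding measurable_cong_sets[OF mu_sets refl, of borel] by measurable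
  qed auto
  have R0: "R 0 = (\<integral>\<xi>. 1 \<partial>\<mu>)" using spectral by simp
  have R1: "\<bar>R z\<bar> \<le> 1" for z
  proof -
    have "R z \<le> R 0" unfolding R0 spectral[rule_format, of z]
      using cosint by (intro integral_mono) auto
    moreover have "- R z \<le> R 0"
    proof -
      have "- R z = (\<integral>\<xi>. - cos (z*\<xi>) \<partial>\<mu>)" using spectral by simp
      also have "\<dots> \<le> (\<integral>\<xi>. 1 \<partial>\<mu>)" using cosint by (intro integral_mono) auto
      finally show ?thesis using R0 by simp
    qed
    ultimately show ?thesis using var1 by linarith
  qed
  obtain N0 where N0: "\<And>t. t \<ge> N0 \<Longrightarrow> L t = 1" using L1 by (auto simp: eventually_at_top_linorder)
  define T where "T = max N0 1"
  have T: "T > 0" "\<And>t. t \<ge> T \<Longrightarrow> L t = 1" using N0 by (auto simp: T_def)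
  define Cb where "Cb = \<kappa> + T powr \<alpha>"
  have Cb: "Cb > 0" using kappa T by (simp add: Cb_def add_pos_nonneg)
  have R2: "\<bar>R z\<bar> \<le> Cb * \<bar>z\<bar> powr (-\<alpha>)" if z: "z \<noteq> 0" for z
  proof (cases "\<bar>z\<bar> \<ge> T")
    case True
    then have "R z = \<kappa> * \<bar>z\<bar> powr (-\<alpha>)" using covR z T by simp
    then have "\<bar>R z\<bar> = \<kappa> * \<bar>z\<bar> powr (-\<alpha>)" using kappa by simp
    also have "\<dots> \<le> Cb * \<bar>z\<bar> powr (-\<alpha>)" by (intro mult_right_mono) (auto simp: Cb_def)
    finally show ?thesis .
  next
    case False
    have "T powr (-\<alpha>) \<le> \<bar>z\<bar> powr (-\<alpha>)" using False z alpha by (intro powr_mono2') auto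
    then have "T powr \<alpha> * T powr (-\<alpha>) \<le> T powr \<alpha> * \<bar>z\<bar> powr (-\<alpha>)" by (intro mult_left_mono) auto
    moreover have "T powr \<alpha> * T powr (-\<alpha>) = 1" using T by (simp flip: powr_add)
    moreover have "T powr \<alpha> * \<bar>z\<bar> powr (-\<alpha>) \<le> Cb * \<bar>z\<bar> powr (-\<alpha>)"
      using kappa by (intro mult_right_mono) (auto simp: Cb_def)
    ultimately show ?thesis using R1[of z] by linarith
  qed
  define K where "K = 1 + 2 * Cb / (1 - \<alpha>)"
  have "2 * Cb / (1 - \<alpha>) > 0" using Cb alpha by simp
  then have K: "K > 0" by (simp add: K_def)
  define k where "k = nat \<lceil>p/2\<rceil>"
  have pk: "0 \<le> p" "p \<le> 2 * real k" using p2 by (auto simp: k_def) linarith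
  define Mp where "Mp = (1 + fact(2*k)/(2^k*fact k) :: real)"
  have Mp: "Mp > 0" by (simp add: Mp_def add_pos_nonneg)
  define Cst where "Cst = Mp * K powr (p/2)"
  have Cst: "Cst > 0" using Mp K by (simp add: Cst_def)
  have main: "(\<integral>\<^sup>+ \<omega>. ennreal (\<bar>W_tilde \<alpha> g \<epsilon> x \<omega> - W_tilde \<alpha> g \<epsilon> y \<omega>\<bar> powr p) \<partial>M)
             \<le> ennreal (Cst * \<bar>x - y\<bar> powr (p * (1 - \<alpha>/2)))"
    if eps: "\<epsilon> > 0" and yx: "y < x" for \<epsilon> x y
  proof -
    define \<Delta> where "\<Delta> = x - y"
    have D: "\<Delta> > 0" using yx by (simp add: \<Delta>_def)
    define c where "c n = \<epsilon> powr (-\<alpha>/2) * (\<Delta>/real n)" for n :: nat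
    define a where "a n i = (y + real i * (\<Delta>/real n))/\<epsilon>" for n i :: nat
    define S where "S n \<omega> = (\<Sum>i<n. c n * g (a n i) \<omega>)" for n \<omega>
    have Sm[measurable]: "S n \<in> borel_measurable M" for n unfolding S_def by measurable
    have Slim: "(\<lambda>n. S n \<omega>) \<longlonglongrightarrow> W_tilde \<alpha> g \<epsilon> x \<omega> - W_tilde \<alpha> g \<epsilon> y \<omega>" if \<omega>: "\<omega> \<in> space M" for \<omega>
    proof -
      have c1: "continuous_on UNIV (\<lambda>u::real. u/\<epsilon>)"
        using eps by (auto intro!: continuous_intros)
      have cf: "continuous_on UNIV (\<lambda>u. g (u/\<epsilon>) \<omega>)"
        using continuous_on_compose2[OF cont[rule_format, OF \<omega>] c1] by simp
      have "(\<lambda>n. (x-y)/n * (\<Sum>i<n. g ((y + real i*(x-y)/n)/\<epsilon>) \<omega>)) \<longlonglongrightarrow>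
          (LBINT u=0..x. g (u/\<epsilon>) \<omega>) - (LBINT u=0..y. g (u/\<epsilon>) \<omega>)"
        by (rule riemann[OF yx cf deriv_LBINT[OF cf]])
      then have "(\<lambda>n. \<epsilon> powr (-\<alpha>/2) * ((x-y)/n * (\<Sum>i<n. g ((y + real i*(x-y)/n)/\<epsilon>) \<omega>))) \<longlonglongrightarrow>
          \<epsilon> powr (-\<alpha>/2) * ((LBINT u=0..x. g (u/\<epsilon>) \<omega>) - (LBINT u=0..y. g (u/\<epsilon>) \<omega>))"
        by (rule tendsto_mult_left)
      moreover have "\<epsilon> powr (-\<alpha>/2) * ((x-y)/n * (\<Sum>i<n. g ((y + real i*(x-y)/n)/\<epsilon>) \<omega>)) = S n \<omega>" for n
        by (simp add: S_def c_def a_def \<Delta>_def sum_distrib_left mult_ac)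
      moreover have "W_tilde \<alpha> g \<epsilon> x \<omega> - W_tilde \<alpha> g \<epsilon> y \<omega> =
          \<epsilon> powr (-\<alpha>/2) * ((LBINT u=0..x. g (u/\<epsilon>) \<omega>) - (LBINT u=0..y. g (u/\<epsilon>) \<omega>))"
        by (simp add: W_tilde_def right_diff_distrib)
      ultimately show ?thesis by simp
    qed
    have gaussS: "\<exists>v. centered_gaussian_rv M (S n) v" for n
    proof -
      have len: "length (map (a n) [0..<n]) = length (replicate n (c n))" by simp
      obtain v where v: "centered_gaussian_rv M (\<lambda>\<omega>. \<Sum>i<length (map (a n) [0..<n]).
          replicate n (c n) ! i * g (map (a n) [0..<n] ! i) \<omega>) v"
        using gauss len unfolding centered_gaussian_field_def by blast
      moreover have "(\<lambda>\<omega>. \<Sum>i<length (map (a n) [0..<n]).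
          replicate n (c n) ! i * g (map (a n) [0..<n] ! i) \<omega>) = S n"
        by (auto simp: S_def intro!: sum.cong)
      ultimately show ?thesis by auto
    qed
    define V where "V n = (\<Sum>i<n. \<Sum>j<n. c n * c n * R (a n i - a n j))" for n
    have SV: "(\<integral>\<^sup>+\<omega>. ennreal (\<bar>S n \<omega>\<bar> powr p) \<partial>M) \<le> ennreal (Mp * V n powr (p/2)) \<and> V n \<ge> 0" for n
    proof -
      obtain v where G: "centered_gaussian_rv M (S n) v" using gaussS by blast
      have v0: "v \<ge> 0" using G by (simp add: centered_gaussian_rv_def)
      have m1: "(\<integral>\<omega>. (S n \<omega>)^2 \<partial>M) = v" using gauss_moment(1)[OF prob G pk] by simp
      have m2: "(\<integral>\<^sup>+\<omega>. ennreal (\<bar>S n \<omega>\<bar> powr p) \<partial>M) \<le> ennreal (Mp * v powr (p/2))"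
        using gauss_moment(2)[OF prob G pk] by (simp add: Mp_def)
      have intg: "integrable M (\<lambda>\<omega>. g s \<omega> * g t \<omega>)" for s t using stat by (simp add: stationary_cov_def)
      have "(\<integral>\<omega>. (S n \<omega>)^2 \<partial>M) = (\<integral>\<omega>. (\<Sum>i<n. \<Sum>j<n. c n * c n * (g (a n i) \<omega> * g (a n j) \<omega>)) \<partial>M)"
      proof -
        have "(S n \<omega>)^2 = (\<Sum>i<n. \<Sum>j<n. c n * c n * (g (a n i) \<omega> * g (a n j) \<omega>))" for \<omega>
          by (simp add: S_def power2_eq_square sum_product mult_ac)
        then show ?thesis by simp
      qed
      also have "\<dots> = (\<Sum>i<n. \<Sum>j<n. c n * c n * (\<integral>\<omega>. g (a n i) \<omega> * g (a n j) \<omega> \<partial>M))"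
        using intg by (simp add: integral_sum integrable_sum)
      also have "\<dots> = V n" using stat by (simp add: stationary_cov_def V_def)
      finally have "v = V n" using m1 by simp
      then show ?thesis using m2 v0 by simp
    qed
    have ev: "eventually (\<lambda>n. V n \<le> K * \<Delta> powr (2-\<alpha>)) sequentially"
    proof -
      define A where "A = 2 * \<epsilon> powr (-\<alpha>) * \<Delta> * \<Delta>"
      define B where "B = \<Delta> powr (2-\<alpha>)"
      have B: "B > 0" using D by (simp add: B_def)
      have A: "A > 0" using D eps by (simp add: A_def)
      show ?thesis unfolding eventually_sequentially
      proof (intro exI[of _ "nat \<lceil>A/B\<rceil> + 1"] allI impI)
        fix n assume n: "n \<ge> nat \<lceil>A/B\<rceil> + 1"
        then have npos: "n > 0" by simp
        have "A/B \<le> real n" using n by linarith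
        then have "A \<le> real n * B" using B by (simp add: divide_le_eq)
        then have AB: "2 * \<epsilon> powr (-\<alpha>) * (\<Delta>/n) * \<Delta> \<le> B" using npos
          by (simp add: A_def field_simps)
        have "V n \<le> 2 * \<epsilon> powr (-\<alpha>) * (\<Delta>/n) * \<Delta> + 2 * Cb / (1-\<alpha>) * \<Delta> powr (2-\<alpha>)"
          unfolding V_def c_def a_def
          by (rule var_bound[OF alpha Cb R1 R2 eps npos D])
        also have "\<dots> \<le> K * \<Delta> powr (2-\<alpha>)" using AB by (simp add: K_def B_def algebra_simps)
        finally show "V n \<le> K * \<Delta> powr (2-\<alpha>)" .
      qed
    qed
    have ev2: "eventually (\<lambda>n. (\<integral>\<^sup>+\<omega>. ennreal (\<bar>S n \<omega>\<bar> powr p) \<partial>M)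
        \<le> ennreal (Cst * \<Delta> powr (p * (1 - \<alpha>/2)))) sequentially"
    proof (rule eventually_mono[OF ev])
      fix n assume Vn: "V n \<le> K * \<Delta> powr (2-\<alpha>)"
      have "V n powr (p/2) \<le> (K * \<Delta> powr (2-\<alpha>)) powr (p/2)"
        using SV[of n] Vn pk by (intro powr_mono2) auto
      also have "\<dots> = K powr (p/2) * \<Delta> powr (p * (1 - \<alpha>/2))"
      proof -
        have ex: "(2-\<alpha>)*p/2 = p*(1-\<alpha>/2)" by (simp add: field_simps)
        show ?thesis using K D by (simp add: powr_mult powr_powr ex)
      qed
      finally have "Mp * V n powr (p/2) \<le> Cst * \<Delta> powr (p * (1 - \<alpha>/2))"
        using Mp by (simp add: Cst_def mult.assoc mult_left_mono)
      then show "(\<integral>\<^sup>+\<omega>. ennreal (\<bar>S n \<omega>\<bar> powr p) \<partial>M) \<le> ennreal (Cst * \<Delta> powr (p * (1 - \<alpha>/2)))"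
        using SV[of n] by (meson ennreal_leI order_trans)
    qed
    have "(\<integral>\<^sup>+ \<omega>. ennreal (\<bar>W_tilde \<alpha> g \<epsilon> x \<omega> - W_tilde \<alpha> g \<epsilon> y \<omega>\<bar> powr p) \<partial>M)
        = (\<integral>\<^sup>+ \<omega>. liminf (\<lambda>n. ennreal (\<bar>S n \<omega>\<bar> powr p)) \<partial>M)"
    proof (intro nn_integral_cong)
      fix \<omega> assume \<omega>: "\<omega> \<in> space M"
      have "(\<lambda>n. ennreal (\<bar>S n \<omega>\<bar> powr p)) \<longlonglongrightarrow> ennreal (\<bar>W_tilde \<alpha> g \<epsilon> x \<omega> - W_tilde \<alpha> g \<epsilon> y \<omega>\<bar> powr p)"
        using pk p2 by (intro tendsto_ennrealI tendsto_powr' tendsto_rabs Slim[OF \<omega>] tendsto_const) auto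
      then show "ennreal (\<bar>W_tilde \<alpha> g \<epsilon> x \<omega> - W_tilde \<alpha> g \<epsilon> y \<omega>\<bar> powr p) = liminf (\<lambda>n. ennreal (\<bar>S n \<omega>\<bar> powr p))"
        by (intro lim_imp_Liminf[symmetric]) auto
    qed
    also have "\<dots> \<le> liminf (\<lambda>n. \<integral>\<^sup>+\<omega>. ennreal (\<bar>S n \<omega>\<bar> powr p) \<partial>M)"
      by (rule nn_integral_liminf) measurable
    also have "\<dots> \<le> ennreal (Cst * \<Delta> powr (p * (1 - \<alpha>/2)))"
      by (rule Liminf_le[OF _ ev2]) simp
    finally show ?thesis using D by (simp add: \<Delta>_def)
  qed
  show "\<exists>C>0. \<forall>\<epsilon>>0. \<forall>x y.
           (\<integral>\<^sup>+ \<omega>. ennreal (\<bar>W_tilde \<alpha> g \<epsilon> x \<omega> - W_tilde \<alpha> g \<epsilon> y \<omega>\<bar> powr p) \<partial>M)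
             \<le> ennreal (C * \<bar>x - y\<bar> powr (p * (1 - \<alpha>/2)))"
  proof (intro exI[of _ Cst] conjI allI impI Cst)
    fix \<epsilon> x y :: real assume eps: "\<epsilon> > 0"
    consider "y < x" | "x = y" | "x < y" by linarith
    then show "(\<integral>\<^sup>+ \<omega>. ennreal (\<bar>W_tilde \<alpha> g \<epsilon> x \<omega> - W_tilde \<alpha> g \<epsilon> y \<omega>\<bar> powr p) \<partial>M)
             \<le> ennreal (Cst * \<bar>x - y\<bar> powr (p * (1 - \<alpha>/2)))"
    proof cases
      case 1 then show ?thesis using main[OF eps] by blast
    next
      case 2 then show ?thesis by simp
    next
      case 3 then show ?thesis using main[OF eps 3] by (simp add: abs_minus_commute)
    qed
  qed
qed

end
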